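(* Let $p\geq1$, let $G$ be a discrete group with identity $e$, let $a\in G$, and let $\mu$ be a left Haar measure on $G$ with $\mu(\{e\})\geq 1$. Let $(\gamma_n)_n$ be an unbounded sequence of non-negative integers and let $w:G\to(0,\infty)$ be a bounded function. Suppose there are a finite nonempty set $F\subseteq G$ and $N>0$ such that $a^{\gamma_n}F\cap F=\varnothing$ for all $n\geq N$ and $$\beta:=\inf\Big\{\prod_{k=1}^{\gamma_n}w(a^k t):\ n\geq N,\ t\in F\Big\}>0.$$ Then the set $$\Lambda:=\big\{f\in L^p(G,\mu):\ \|T_{a,w,p}^{\gamma_n}f-\chi_F\|_p\geq\mu(F)^{1/p}\ \text{ for all } n\geq N\big\}$$ is not $\sigma$-porous in $L^p(G,\mu)$.
   Context: For $a\in G$ and a bounded weight $w:G\to(0,\infty)$, the weighted translation operator $T_{a,w,p}:L^p(G,\mu)\to L^p(G,\mu)$ is $(T_{a,w,p}f)(x)=w(x)\,f(a^{-1}x)$; $T_{a,w,p}^n$ denotes its $n$-th power ($T^0=I$). Porosity: Let $X$ be a metric space and $0<\lambda<1$. A set $E\subseteq X$ is $\lambda$-porous at $x\in E$ if for each $\delta>0$ there is $y\in B(x;\delta)\setminus\{x\}$ with $B(y;\lambda\, d(x,y))\cap E=\varnothing$; $E$ is $\lambda$-porous if it is $\lambda$-porous at each of its points; $E$ is $\sigma$-$\lambda$-porous if it is a countable union of $\lambda$-porous subsets of $X$. A set is called $\sigma$-porous if it is $\sigma$-$\lambda$-porous for some $\lambda\in(0,1)$; "not $\sigma$-porous" means not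 $\sigma$-$\lambda$-porous for any $\lambda\in(0,1)$. *)

theory Defs
  imports "HOL-Analysis.Analysis"
begin

definition lambda_porous_at :: "'a set \<Rightarrow> ('a \<Rightarrow> 'a \<Rightarrow> real) \<Rightarrow> real \<Rightarrow> 'a set \<Rightarrow> 'a \<Rightarrow> bool" where
  "lambda_porous_at X d lam E x \<longleftrightarrow>
     (\<forall>\<delta>>0. \<exists>y\<in>X. d x y < \<delta> \<and> y \<noteq> x \<and>
        (\<forall>z\<in>X. d y z < lam * d x y \<longrightarrow> z \<notin> E))"

definition lambda_porous :: "'a set \<Rightarrow> ('a \<Rightarrow> 'a \<Rightarrow> real) \<Rightarrow> real \<Rightarrow> 'a set \<Rightarrow> bool" where
  "lambda_porous X d lam E \<longleftrightarrow> E \<subseteq> X \<and> (\<forall>x\<in>E. lambda_porous_at X d lam E x)"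

definition sigma_lambda_porous :: "'a set \<Rightarrow> ('a \<Rightarrow> 'a \<Rightarrow> real) \<Rightarrow> real \<Rightarrow> 'a set \<Rightarrow> bool" where
  "sigma_lambda_porous X d lam E \<longleftrightarrow>
     (\<exists>A :: nat \<Rightarrow> 'a set. (\<forall>n. lambda_porous X d lam (A n)) \<and> E = (\<Union>n. A n))"

definition sigma_porous :: "'a set \<Rightarrow> ('a \<Rightarrow> 'a \<Rightarrow> real) \<Rightarrow> 'a set \<Rightarrow> bool" where
  "sigma_porous X d E \<longleftrightarrow> (\<exists>lam. 0 < lam \<and> lam < 1 \<and> sigma_lambda_porous X d lam E)"

text \<open>Left Haar measure on a discrete group (group written additively via group_add,
  which need not be commutative): all subsets measurable, left invariant,
  Radon (finite on compact = finite sets, inner regular on open = all sets).\<close>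

definition discrete_left_haar :: "'g::group_add measure \<Rightarrow> bool" where
  "discrete_left_haar M \<longleftrightarrow>
     sets M = sets (count_space UNIV) \<and>
     (\<forall>g A. emeasure M ((\<lambda>x. g + x) ` A) = emeasure M A) \<and>
     (\<forall>K. finite K \<longrightarrow> emeasure M K < \<infinity>) \<and>
     (\<forall>A. emeasure M A = (SUP K \<in> {K. finite K \<and> K \<subseteq> A}. emeasure M K)) \<and>
     emeasure M UNIV \<noteq> 0"

definition Lp_space :: "'g measure \<Rightarrow> real \<Rightarrow> ('g \<Rightarrow> complex) set" where
  "Lp_space M p = {f. f \<in> borel_measurable M \<and> integrable M (\<lambda>x. norm (f x) powr p)}"

definition Lp_norm :: "'g measure \<Rightarrow> real \<Rightarrow> ('g \<Rightarrow> complex) \<Rightarrow> real" where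
  "Lp_norm M p f = (\<integral>x. norm (f x) powr p \<partial>M) powr (1 / p)"

definition Lp_dist :: "'g measure \<Rightarrow> real \<Rightarrow> ('g \<Rightarrow> complex) \<Rightarrow> ('g \<Rightarrow> complex) \<Rightarrow> real" where
  "Lp_dist M p f g = Lp_norm M p (\<lambda>x. f x - g x)"

text \<open>Weighted translation (T f)(x) = w(x) f(a^{-1} x); a^{-1} x is written -a + x.\<close>

definition weighted_translation :: "'g::group_add \<Rightarrow> ('g \<Rightarrow> real) \<Rightarrow> ('g \<Rightarrow> complex) \<Rightarrow> ('g \<Rightarrow> complex)" where
  "weighted_translation a w f = (\<lambda>x. complex_of_real (w x) * f (- a + x))"

text \<open>Group power a^k acting by left multiplication: a^k t = (plus a ^^ k) t.\<close>

end

theory Submission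
  imports Defs
begin

lemma powr_conv0:
  fixes a b t p :: real
  assumes "p \<ge> 1" "0 \<le> a" "0 \<le> b" "0 \<le> t" "t \<le> 1"
  shows "(t*a+(1-t)*b) powr p \<le> t * a powr p + (1-t) * b powr p"
proof -
  have le1: "s powr p \<le> s" if "0 \<le> s" "s \<le> 1" for s :: real
    by (metis assms(1) powr_mono' powr_one_gt_zero_iff that(1,2))
  show ?thesis
  proof (cases "a = 0 \<or> b = 0")
    case True
    then show ?thesis
    proof
      assume "a = 0"
      then have "(t*a+(1-t)*b) powr p = (1-t) powr p * b powr p"
        using assms by (simp add: powr_mult)
      also have "\<dots> \<le> (1-t) * b powr p"
        using le1[of "1-t"] assms by (intro mult_right_mono) auto
      finally show ?thesis using \<open>a = 0\<close> assms by simp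
    next
      assume "b = 0"
      then have "(t*a+(1-t)*b) powr p = t powr p * a powr p"
        using assms by (simp add: powr_mult)
      also have "\<dots> \<le> t * a powr p"
        using le1[of "t"] assms by (intro mult_right_mono) auto
      finally show ?thesis using \<open>b = 0\<close> assms by simp
    qed
  next
    case False
    then have "a > 0" "b > 0" using assms by auto
    then show ?thesis
      using convex_onD[OF powr_convex[OF assms(1)], of t b a] assms
      by (simp add: add.commute)
  qed
qed

lemma powr_tri_conv:
  fixes a b A B p :: real
  assumes "p \<ge> 1" "0 \<le> a" "0 \<le> b" "A > 0" "B > 0"
  shows "(a+b) powr p \<le> ((A+B) powr p * (A/(A+B)) / A powr p) * a powr p
           + ((A+B) powr p * (B/(A+B)) / B powr p) * b powr p"
proof -
  define t where "t = A/(A+B)"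
  have t: "0 \<le> t" "t \<le> 1" "1 - t = B/(A+B)" using assms by (auto simp: t_def field_simps)
  have "(A+B) * (t * (a/A)) = a" "(A+B) * ((1-t) * (b/B)) = b"
    using assms t by (simp_all add: t_def)
  then have "a + b = (A+B) * (t * (a/A) + (1-t) * (b/B))"
    by (simp add: distrib_left)
  then have "(a+b) powr p = (A+B) powr p * (t * (a/A) + (1-t) * (b/B)) powr p"
    using assms t by (simp add: powr_mult)
  also have "\<dots> \<le> (A+B) powr p * (t * (a/A) powr p + (1-t) * (b/B) powr p)"
    using assms t by (intro mult_left_mono powr_conv0) auto
  also have "\<dots> = ((A+B) powr p * (A/(A+B)) / A powr p) * a powr p
           + ((A+B) powr p * (B/(A+B)) / B powr p) * b powr p"
    using assms t by (simp add: powr_divide t_def field_simps)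
  finally show ?thesis .
qed

locale lpc =
  fixes M :: "'g measure" and p :: real
  assumes p1: "p \<ge> 1"
    and setsM: "sets M = sets (count_space UNIV)"
    and single: "\<And>x. emeasure M {x} \<ge> 1"
begin

abbreviation "X \<equiv> Lp_space M p"
abbreviation "d \<equiv> Lp_dist M p"
abbreviation I :: "('g \<Rightarrow> complex) \<Rightarrow> real" where "I h \<equiv> \<integral>x. norm (h x) powr p \<partial>M"

lemma meas[measurable]: "f \<in> M \<rightarrow>\<^sub>M borel"
  using setsM by (simp add: measurable_def space_borel)

lemma inX: "h \<in> X \<longleftrightarrow> integrable M (\<lambda>x. norm (h x) powr p)"
  by (simp add: Lp_space_def)

lemma I_nonneg: "I h \<ge> 0"
  by (simp add: Bochner_Integration.integral_nonneg)

lemma norm_eq: "Lp_norm M p h = I h powr (1/p)"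
  by (simp add: Lp_norm_def)

lemma norm_nonneg: "Lp_norm M p h \<ge> 0"
  by (simp add: Lp_norm_def)

lemma I_eq: "I h = Lp_norm M p h powr p"
  using p1 I_nonneg[of h] by (simp add: norm_eq powr_powr)

lemma sets_all[simp]: "A \<in> sets M"
  using setsM by simp

lemma pointI: assumes "h \<in> X" shows "norm (h x) powr p \<le> I h"
proof -
  have int: "integrable M (\<lambda>x. norm (h x) powr p)" using assms inX by simp
  have "ennreal (norm (h x) powr p) \<le> ennreal (norm (h x) powr p) * emeasure M {x}"
    using mult_left_mono[OF single[of x], of "ennreal (norm (h x) powr p)"] by simp
  also have "\<dots> = (\<integral>\<^sup>+ y. ennreal (norm (h x) powr p) * indicator {x} y \<partial>M)"
    by (simp add: nn_integral_cmult_indicator)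
  also have "\<dots> \<le> (\<integral>\<^sup>+ y. ennreal (norm (h y) powr p) \<partial>M)"
    by (intro nn_integral_mono) (auto split: split_indicator)
  also have "\<dots> = ennreal (I h)"
    using int by (intro nn_integral_eq_integral) auto
  finally show ?thesis using I_nonneg[of h] by simp
qed

lemma point: assumes "h \<in> X" shows "norm (h x) \<le> Lp_norm M p h"
proof -
  have "norm (h x) = (norm (h x) powr p) powr (1/p)"
    using p1 by (simp add: powr_powr)
  also have "\<dots> \<le> I h powr (1/p)"
    using pointI[OF assms, of x] p1 by (intro powr_mono2) auto
  finally show ?thesis by (simp add: norm_eq)
qed

lemma addX: assumes "u \<in> X" "v \<in> X" shows "(\<lambda>x. u x + v x) \<in> X"
proof -
  have iu: "integrable M (\<lambda>x. norm (u x) powr p)" and iv: "integrable M (\<lambda>x. norm (v x) powr p)"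
    using assms by (simp_all add: inX)
  have "integrable M (\<lambda>x. 2 powr p * (1/2) * norm (u x) powr p + 2 powr p * (1/2) * norm (v x) powr p)"
    by (intro Bochner_Integration.integrable_add integrable_mult_right iu iv)
  then show ?thesis unfolding inX
  proof (rule Bochner_Integration.integrable_bound)
    show "AE x in M. norm (norm (u x + v x) powr p) \<le> norm (2 powr p * (1/2) * norm (u x) powr p + 2 powr p * (1/2) * norm (v x) powr p)"
    proof (intro AE_I2)
      fix x
      have "norm (u x + v x) powr p \<le> (norm (u x) + norm (v x)) powr p"
        using p1 by (intro powr_mono2) (auto simp: norm_triangle_ineq)
      also have "\<dots> \<le> 2 powr p * (1/2) * norm (u x) powr p + 2 powr p * (1/2) * norm (v x) powr p"
        using powr_tri_conv[OF p1, of "norm (u x)" "norm (v x)" 1 1] by simp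
      finally show "norm (norm (u x + v x) powr p) \<le> norm (2 powr p * (1/2) * norm (u x) powr p + 2 powr p * (1/2) * norm (v x) powr p)"
        by simp
    qed
  qed simp
qed

lemma multX: assumes "u \<in> X" shows "(\<lambda>x. c * u x) \<in> X"
proof -
  have "integrable M (\<lambda>x. norm c powr p * norm (u x) powr p)"
    using assms by (intro integrable_mult_right) (simp add: inX)
  then show ?thesis by (simp add: inX norm_mult powr_mult)
qed

lemma diffX: assumes "u \<in> X" "v \<in> X" shows "(\<lambda>x. u x - v x) \<in> X"
  using addX[OF assms(1) multX[OF assms(2), of "-1"]] by simp

lemma zeroX: "(\<lambda>x. 0) \<in> X"
  by (simp add: inX)

lemma norm_zero_pt: assumes "u \<in> X" "Lp_norm M p u = 0" shows "u x = 0"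
  using point[OF assms(1), of x] assms(2) by simp

lemma tri: assumes "u \<in> X" "v \<in> X"
  shows "Lp_norm M p (\<lambda>x. u x + v x) \<le> Lp_norm M p u + Lp_norm M p v"
proof -
  define A where "A = Lp_norm M p u"
  define B where "B = Lp_norm M p v"
  have A0: "A \<ge> 0" and B0: "B \<ge> 0" by (simp_all add: A_def B_def norm_nonneg)
  show ?thesis
  proof (cases "A = 0 \<or> B = 0")
    case True
    then show ?thesis
    proof
      assume "A = 0"
      then have "u = (\<lambda>x. 0)" using norm_zero_pt[OF assms(1)] A_def by auto
      then show ?thesis using \<open>A = 0\<close> A_def by simp
    next
      assume "B = 0"
      then have "v = (\<lambda>x. 0)" using norm_zero_pt[OF assms(2)] B_def by auto
      then show ?thesis using \<open>B = 0\<close> B_def by simp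
    qed
  next
    case False
    then have Ap: "A > 0" and Bp: "B > 0" using A0 B0 by auto
    define \<alpha> where "\<alpha> = (A+B) powr p * (A/(A+B)) / A powr p"
    define \<beta> where "\<beta> = (A+B) powr p * (B/(A+B)) / B powr p"
    have iu: "integrable M (\<lambda>x. norm (u x) powr p)" and iv: "integrable M (\<lambda>x. norm (v x) powr p)"
      using assms by (simp_all add: inX)
    have iuv: "integrable M (\<lambda>x. norm (u x + v x) powr p)"
      using addX[OF assms] by (simp add: inX)
    have "I (\<lambda>x. u x + v x) \<le> (\<integral>x. \<alpha> * norm (u x) powr p + \<beta> * norm (v x) powr p \<partial>M)"
    proof (rule integral_mono)
      show "integrable M (\<lambda>x. \<alpha> * norm (u x) powr p + \<beta> * norm (v x) powr p)"
        by (intro Bochner_Integration.integrable_add integrable_mult_right iu iv)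
      fix x
      have "norm (u x + v x) powr p \<le> (norm (u x) + norm (v x)) powr p"
        using p1 by (intro powr_mono2) (auto simp: norm_triangle_ineq)
      also have "\<dots> \<le> \<alpha> * norm (u x) powr p + \<beta> * norm (v x) powr p"
        unfolding \<alpha>_def \<beta>_def using powr_tri_conv[OF p1 _ _ Ap Bp] by simp
      finally show "norm (u x + v x) powr p \<le> \<alpha> * norm (u x) powr p + \<beta> * norm (v x) powr p" .
    qed (rule iuv)
    also have "\<dots> = \<alpha> * I u + \<beta> * I v"
      using iu iv by simp
    also have "\<dots> = \<alpha> * A powr p + \<beta> * B powr p"
      by (simp add: I_eq A_def B_def)
    also have "\<dots> = (A+B) powr p"
    proof -
      have "\<alpha> * A powr p = (A+B) powr p * (A/(A+B))" using Ap by (simp add: \<alpha>_def)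
      moreover have "\<beta> * B powr p = (A+B) powr p * (B/(A+B))" using Bp by (simp add: \<beta>_def)
      moreover have "A/(A+B) + B/(A+B) = 1" using Ap Bp by (simp add: add_divide_distrib[symmetric])
      ultimately show ?thesis by (metis distrib_left mult.right_neutral)
    qed
    finally have le: "I (\<lambda>x. u x + v x) \<le> (A+B) powr p" .
    have "Lp_norm M p (\<lambda>x. u x + v x) = I (\<lambda>x. u x + v x) powr (1/p)" by (simp add: norm_eq)
    also have "\<dots> \<le> ((A+B) powr p) powr (1/p)"
      using le p1 I_nonneg by (intro powr_mono2) auto
    also have "\<dots> = A + B" using p1 Ap Bp by (simp add: powr_powr)
    finally show ?thesis by (simp add: A_def B_def)
  qed
qed

lemma dist_sym: "d f g = d g f"
  by (simp add: Lp_dist_def Lp_norm_def norm_minus_commute)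

lemma dist_self: "d f f = 0"
  by (simp add: Lp_dist_def Lp_norm_def)

lemma dist_nonneg: "d f g \<ge> 0"
  by (simp add: Lp_dist_def norm_nonneg)

lemma dist_tri: assumes "f \<in> X" "g \<in> X" "h \<in> X" shows "d f h \<le> d f g + d g h"
  using tri[OF diffX[OF assms(1,2)] diffX[OF assms(2,3)]] by (simp add: Lp_dist_def)

lemma dist_pos: assumes "f \<in> X" "g \<in> X" "f \<noteq> g" shows "d f g > 0"
proof -
  obtain x where "f x \<noteq> g x" using assms(3) by auto
  then have "0 < norm (f x - g x)" by simp
  also have "\<dots> \<le> d f g" unfolding Lp_dist_def by (rule point[OF diffX[OF assms(1,2)]])
  finally show ?thesis .
qed

lemma dist_pt: assumes "f \<in> X" "g \<in> X" shows "norm (f x - g x) \<le> d f g"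
  unfolding Lp_dist_def by (rule point[OF diffX[OF assms(1,2)]])

lemma limit:
  assumes c: "\<And>k. c k \<in> X" and r: "r \<longlonglongrightarrow> 0"
    and cd: "\<And>k j. k \<le> j \<Longrightarrow> d (c k) (c j) \<le> r k"
  shows "\<exists>f\<in>X. \<forall>k. d (c k) f \<le> r k"
proof -
  have rnn: "r k \<ge> 0" for k using cd[of k k] dist_self[of "c k"] by simp
  have pt: "norm (c k x - c j x) \<le> r k" if "k \<le> j" for k j x
    using dist_pt[OF c[of k] c[of j], of x] cd[OF that] by simp
  have cau: "Cauchy (\<lambda>k. c k x)" for x
  proof (rule metric_CauchyI)
    fix e :: real assume "e > 0"
    then have "e/2 > 0" by simp
    with r obtain K where K: "\<And>k. k \<ge> K \<Longrightarrow> norm (r k - 0) < e/2"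
      unfolding LIMSEQ_iff by blast
    have rK: "r K < e/2" using K[of K] rnn[of K] by simp
    show "\<exists>M. \<forall>m\<ge>M. \<forall>n\<ge>M. dist (c m x) (c n x) < e"
    proof (intro exI allI impI)
      fix m n assume "m \<ge> K" "n \<ge> K"
      have "dist (c m x) (c n x) = norm ((c K x - c n x) - (c K x - c m x))"
        by (simp add: dist_norm algebra_simps)
      also have "\<dots> \<le> norm (c K x - c n x) + norm (c K x - c m x)"
        by (rule norm_triangle_ineq4)
      also have "\<dots> \<le> r K + r K" using pt \<open>m \<ge> K\<close> \<open>n \<ge> K\<close> by (intro add_mono) auto
      finally show "dist (c m x) (c n x) < e" using rK by simp
    qed
  qed
  define f where "f x = lim (\<lambda>k. c k x)" for x
  have conv: "(\<lambda>k. c k x) \<longlonglongrightarrow> f x" for x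
    using cau[of x] unfolding f_def by (simp add: Cauchy_convergent_iff convergent_LIMSEQ_iff)
  have main: "(\<lambda>x. f x - c k x) \<in> X \<and> I (\<lambda>x. f x - c k x) \<le> r k powr p" for k
  proof -
    define u where "u j x = ennreal (norm (c j x - c k x) powr p)" for j x
    have uconv: "(\<lambda>j. u j x) \<longlonglongrightarrow> ennreal (norm (f x - c k x) powr p)" for x
      unfolding u_def using p1
      by (intro tendsto_ennrealI tendsto_powr' tendsto_norm tendsto_diff conv tendsto_const) auto
    have "(\<integral>\<^sup>+x. ennreal (norm (f x - c k x) powr p) \<partial>M) = (\<integral>\<^sup>+x. liminf (\<lambda>j. u j x) \<partial>M)"
      using uconv by (intro nn_integral_cong) (metis lim_imp_Liminf trivial_limit_sequentially)
    also have "\<dots> \<le> liminf (\<lambda>j. integral\<^sup>N M (u j))"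
      by (intro nn_integral_liminf) simp
    also have "\<dots> \<le> limsup (\<lambda>j. integral\<^sup>N M (u j))"
      by (intro Liminf_le_Limsup) simp
    also have "\<dots> \<le> ennreal (r k powr p)"
    proof (intro Limsup_bounded eventually_sequentiallyI)
      fix j assume "j \<ge> k"
      have int: "integrable M (\<lambda>x. norm (c j x - c k x) powr p)"
        using diffX[OF c[of j] c[of k]] by (simp add: inX)
      have "integral\<^sup>N M (u j) = ennreal (I (\<lambda>x. c j x - c k x))"
        unfolding u_def using int by (intro nn_integral_eq_integral) auto
      also have "I (\<lambda>x. c j x - c k x) = d (c j) (c k) powr p"
        by (simp add: Lp_dist_def I_eq)
      also have "\<dots> \<le> r k powr p"
        using cd[OF \<open>j \<ge> k\<close>] dist_sym[of "c j" "c k"] dist_nonneg[of "c j" "c k"] p1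
        by (intro powr_mono2) auto
      finally show "integral\<^sup>N M (u j) \<le> ennreal (r k powr p)" by (meson ennreal_leI)
    qed
    finally have le: "(\<integral>\<^sup>+x. ennreal (norm (f x - c k x) powr p) \<partial>M) \<le> ennreal (r k powr p)" .
    have int: "integrable M (\<lambda>x. norm (f x - c k x) powr p)"
      unfolding integrable_iff_bounded using le by (simp add: le_less_trans)
    have "ennreal (I (\<lambda>x. f x - c k x)) = (\<integral>\<^sup>+x. ennreal (norm (f x - c k x) powr p) \<partial>M)"
      using int by (intro nn_integral_eq_integral[symmetric]) auto
    with le have "ennreal (I (\<lambda>x. f x - c k x)) \<le> ennreal (r k powr p)" by simp
    then have "I (\<lambda>x. f x - c k x) \<le> r k powr p"
      using ennreal_le_iff by force
    with int show ?thesis by (simp add: inX)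
  qed
  have fX: "f \<in> X"
    using addX[OF conjunct1[OF main[of 0]] c[of 0]] by simp
  show ?thesis
  proof (intro bexI[OF _ fX] allI)
    fix k
    have "d (c k) f = d f (c k)" by (rule dist_sym)
    also have "\<dots> = I (\<lambda>x. f x - c k x) powr (1/p)" by (simp add: Lp_dist_def norm_eq)
    also have "\<dots> \<le> (r k powr p) powr (1/p)"
      using main[of k] I_nonneg p1 by (intro powr_mono2) auto
    also have "\<dots> = r k" using rnn[of k] p1 by (simp add: powr_powr)
    finally show "d (c k) f \<le> r k" .
  qed
qed

lemma step:
  assumes P: "lambda_porous X d lam A" and lam: "0 < lam" "lam < 1"
    and c: "c \<in> X" and r: "r > 0"
  shows "\<exists>c' r'. c' \<in> X \<and> r' > 0 \<and> r' \<le> r/2 \<and> d c c' + r' \<le> r \<and> (\<forall>z\<in>X. d c' z < 2*r' \<longrightarrow> z \<notin> A)"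
proof (cases "\<exists>z\<in>A. d c z < r/2")
  case False
  then show ?thesis using c r dist_self[of c]
    by (intro exI[of _ c] exI[of _ "r/4"]) auto
next
  case True
  then obtain z where z: "z \<in> A" "d c z < r/2" by blast
  have AX: "A \<subseteq> X" and pz: "lambda_porous_at X d lam A z"
    using P z unfolding lambda_porous_def by auto
  have "r/4 > 0" using r by simp
  then obtain y where y: "y \<in> X" "d z y < r/4" "y \<noteq> z" "\<forall>z'\<in>X. d y z' < lam * d z y \<longrightarrow> z' \<notin> A"
    using pz unfolding lambda_porous_at_def by blast
  have zX: "z \<in> X" using AX z by auto
  have pos: "d z y > 0" using dist_pos[OF zX y(1)] y(3) by auto
  have "d c y \<le> d c z + d z y" by (rule dist_tri[OF c zX y(1)])
  moreover have h: "lam * d z y \<le> d z y" using lam pos by simp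
  ultimately have "d c y + lam * d z y / 2 \<le> r" "lam * d z y / 2 \<le> r / 2" 
    using z(2) y(2) pos by linarith+
  then show ?thesis using y z pos lam r
    by (intro exI[of _ y] exI[of _ "lam * d z y / 2"]) auto
qed

lemma baire:
  assumes f0: "f0 \<in> X" and rho: "\<rho> > 0" and sub: "{g\<in>X. d f0 g < \<rho>} \<subseteq> E"
  shows "\<not> sigma_porous X d E"
proof
  assume "sigma_porous X d E"
  then obtain lam where lam: "0 < lam" "lam < 1" and SL: "sigma_lambda_porous X d lam E"
    unfolding sigma_porous_def by auto
  have "\<exists>A. (\<forall>n::nat. lambda_porous X d lam (A n)) \<and> E = (\<Union>n. A n)"
    using SL unfolding sigma_lambda_porous_def .
  then obtain A :: "nat \<Rightarrow> _" where A: "(\<forall>n. lambda_porous X d lam (A n)) \<and> E = (\<Union>n. A n)" ..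
  then have P0: "\<forall>n. lambda_porous X d lam (A n)" and E: "E = (\<Union>n. A n)" by auto
  have P: "lambda_porous X d lam (A n)" for n using P0 by blast
  define Q where "Q n c r c' r' \<longleftrightarrow> c' \<in> X \<and> r' > 0 \<and> r' \<le> r/2 \<and> d c c' + r' \<le> r \<and> (\<forall>z\<in>X. d c' z < 2*r' \<longrightarrow> z \<notin> A n)" for n c r c' r'
  define S where "S n c r = (SOME q. Q n c r (fst q) (snd q))" for n c r
  have SQ: "Q n c r (fst (S n c r)) (snd (S n c r))" if "c \<in> X" "r > 0" for n c r
  proof -
    have "\<exists>q. Q n c r (fst q) (snd q)"
      using step[OF P lam that] unfolding Q_def by auto
    then show ?thesis unfolding S_def by (rule someI_ex)
  qed
  define s where "s = rec_nat (f0, \<rho>/2) (\<lambda>n q. S n (fst q) (snd q))"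
  define c where "c k = fst (s k)" for k
  define r where "r k = snd (s k)" for k
  have s0: "c 0 = f0" "r 0 = \<rho>/2" by (simp_all add: c_def r_def s_def)
  have sS: "c (Suc k) = fst (S k (c k) (r k))" "r (Suc k) = snd (S k (c k) (r k))" for k
    by (simp_all add: c_def r_def s_def)
  have inv: "c k \<in> X \<and> r k > 0" for k
  proof (induction k)
    case 0 then show ?case using s0 f0 rho by simp
  next
    case (Suc k) then show ?case using SQ[of "c k" "r k" k] sS[of k] unfolding Q_def by auto
  qed
  have Qk: "Q k (c k) (r k) (c (Suc k)) (r (Suc k))" for k
    using SQ[of "c k" "r k" k] inv[of k] sS[of k] by simp
  have chain: "d (c k) (c j) + r j \<le> r k" if "k \<le> j" for k j
    using that
  proof (induction j rule: dec_induct)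
    case base then show ?case by (simp add: dist_self)
  next
    case (step j)
    have "d (c k) (c (Suc j)) \<le> d (c k) (c j) + d (c j) (c (Suc j))"
      using inv by (intro dist_tri) auto
    then show ?case using step.IH Qk[of j] unfolding Q_def by linarith
  qed
  have rb: "r k \<le> (\<rho>/2) * (1/2)^k" for k
  proof (induction k)
    case 0 then show ?case using s0 by simp
  next
    case (Suc k) then show ?case using Qk[of k] unfolding Q_def by simp
  qed
  have rlim: "r \<longlonglongrightarrow> 0"
  proof (rule tendsto_sandwich[of "\<lambda>_. 0" _ _ "\<lambda>k. (\<rho>/2) * (1/2)^k"])
    show "\<forall>\<^sub>F n in sequentially. 0 \<le> r n" using inv by (simp add: less_imp_le)
    show "\<forall>\<^sub>F n in sequentially. r n \<le> \<rho> / 2 * (1 / 2) ^ n" using rb by simp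
    show "(\<lambda>k. \<rho> / 2 * (1 / 2) ^ k) \<longlonglongrightarrow> 0"
      by (intro tendsto_mult_right_zero LIMSEQ_power_zero) simp
  qed simp
  have cd: "d (c k) (c j) \<le> r k" if "k \<le> j" for k j
    using chain[OF that] inv[of j] by linarith
  obtain f where fX: "f \<in> X" and fd: "\<And>k. d (c k) f \<le> r k"
    using limit[of c r, OF conjunct1[OF inv] rlim cd] by blast
  have "f \<in> E" using sub fX fd[of 0] s0 rho by auto
  then obtain n where "f \<in> A n" using E by auto
  moreover have "d (c (Suc n)) f < 2 * r (Suc n)" using fd[of "Suc n"] inv[of "Suc n"] by simp
  ultimately show False using Qk[of n] fX unfolding Q_def by auto
qed

lemma measM: "f \<in> M \<rightarrow>\<^sub>M M"
  using setsM sets_eq_imp_space_eq[OF setsM] by (simp add: measurable_def)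

lemma spaceM: "space M = UNIV"
  using sets_eq_imp_space_eq[OF setsM] by simp

end

lemma Tpow_val:
  fixes a :: "'g::group_add"
  shows "(weighted_translation a w ^^ m) g ((plus a ^^ m) t) = complex_of_real (\<Prod>k=1..m. w ((plus a ^^ k) t)) * g t"
proof (induction m)
  case 0 then show ?case by simp
next
  case (Suc m)
  have "(weighted_translation a w ^^ Suc m) g ((plus a ^^ Suc m) t)
      = complex_of_real (w ((plus a ^^ Suc m) t)) * (weighted_translation a w ^^ m) g ((plus a ^^ m) t)"
    by (simp add: weighted_translation_def add.assoc[symmetric])
  also have "\<dots> = complex_of_real (w ((plus a ^^ Suc m) t) * (\<Prod>k=1..m. w ((plus a ^^ k) t))) * g t"
    using Suc by simp
  also have "w ((plus a ^^ Suc m) t) * (\<Prod>k=1..m. w ((plus a ^^ k) t)) = (\<Prod>k=1..Suc m. w ((plus a ^^ k) t))"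
    by (simp add: prod.nat_ivl_Suc')
  finally show ?case .
qed

theorem mainTheorem6:
  fixes p :: real and M :: "'g::group_add measure" and a :: 'g
    and \<gamma> :: "nat \<Rightarrow> nat" and w :: "'g \<Rightarrow> real" and F :: "'g set" and N :: nat
  assumes hp: "p \<ge> 1"
    and hM: "discrete_left_haar M"
    and he: "emeasure M {0} \<ge> 1"
    and hgam: "\<not> bdd_above (range \<gamma>)"
    and hwpos: "\<forall>x. w x > 0"
    and hwbdd: "bdd_above (range w)"
    and hF: "finite F" "F \<noteq> {}"
    and hN: "N > 0"
    and hdisj: "\<forall>n\<ge>N. ((plus a ^^ \<gamma> n) ` F) \<inter> F = {}"
    and hbeta: "Inf {(\<Prod>k=1..\<gamma> n. w ((plus a ^^ k) t)) | n t. n \<ge> N \<and> t \<in> F} > 0"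
  shows "\<not> sigma_porous (Lp_space M p) (Lp_dist M p)
           {f \<in> Lp_space M p. \<forall>n\<ge>N.
              Lp_norm M p (\<lambda>x. (weighted_translation a w ^^ \<gamma> n) f x - indicator F x)
                \<ge> measure M F powr (1 / p)}"
proof -
  have setsM: "sets M = sets (count_space UNIV)"
    and trans: "\<And>g A. emeasure M ((\<lambda>x. g + x) ` A) = emeasure M A"
    and fin: "\<And>K. finite K \<Longrightarrow> emeasure M K < \<infinity>"
    using hM unfolding discrete_left_haar_def by (blast, blast, blast)
  have single: "emeasure M {x} \<ge> 1" for x
  proof -
    have "{x} = (\<lambda>y. x + y) ` {0}" by simp
    then have "emeasure M {x} = emeasure M {0}" using trans by metis
    then show ?thesis using he by simp
  qed
  interpret lpc M p
    using hp setsM single by unfold_locales auto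
  have distrM: "distr M M (\<lambda>x. -a + x) = M"
  proof (rule measure_eqI)
    show "sets (distr M M (\<lambda>x. -a + x)) = sets M" by simp
    fix A assume "A \<in> sets (distr M M (\<lambda>x. -a + x))"
    have pre: "(\<lambda>x. -a + x) -` A \<inter> space M = (\<lambda>x. a + x) ` A"
    proof (auto simp: spaceM)
      fix x assume "-a + x \<in> A"
      moreover have "x = a + (-a + x)" by simp
      ultimately show "x \<in> (+) a ` A" by blast
    qed
    show "emeasure (distr M M (\<lambda>x. -a + x)) A = emeasure M A"
      using measM by (simp add: emeasure_distr pre trans)
  qed
  obtain W where W: "\<And>x. w x \<le> W" using hwbdd by (auto simp: bdd_above_def)
  have TX: "weighted_translation a w g \<in> X" if g: "g \<in> X" for g
  proof -
    have "integrable (distr M M (\<lambda>x. -a + x)) (\<lambda>x. norm (g x) powr p)"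
      using g distrM by (simp add: inX)
    then have "integrable M (\<lambda>x. norm (g (-a + x)) powr p)"
      using measM by (subst (asm) integrable_distr_eq) auto
    then have "integrable M (\<lambda>x. W powr p * norm (g (-a + x)) powr p)"
      by (rule integrable_mult_right)
    then show ?thesis unfolding inX
    proof (rule Bochner_Integration.integrable_bound)
      show "AE x in M. norm (norm (weighted_translation a w g x) powr p) \<le> norm (W powr p * norm (g (-a + x)) powr p)"
      proof (intro AE_I2)
        fix x
        have wx: "0 < w x" "w x \<le> W" using hwpos W by auto
        have "norm (weighted_translation a w g x) powr p = w x powr p * norm (g (-a + x)) powr p"
          using wx by (simp add: weighted_translation_def norm_mult powr_mult)
        also have "\<dots> \<le> W powr p * norm (g (-a + x)) powr p"
          using wx hp by (intro mult_right_mono powr_mono2) auto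
        finally show "norm (norm (weighted_translation a w g x) powr p) \<le> norm (W powr p * norm (g (-a + x)) powr p)"
          by simp
      qed
    qed simp
  qed
  have TpX: "(weighted_translation a w ^^ m) g \<in> X" if "g \<in> X" for g m
    by (induction m) (simp_all add: that TX)
  have indX: "(\<lambda>x. indicator A x :: complex) \<in> X" if "finite A" for A
  proof -
    have "integrable M (indicator A :: _ \<Rightarrow> real)"
      using fin[OF that] by simp
    moreover have "norm (indicator A x :: complex) powr p = indicator A x" for x
      by (simp split: split_indicator)
    ultimately show ?thesis by (simp add: inX)
  qed
  define S where "S = {(\<Prod>k=1..\<gamma> n. w ((plus a ^^ k) t)) | n t. n \<ge> N \<and> t \<in> F}"
  define \<beta> where "\<beta> = Inf S"
  have bpos: "\<beta> > 0" using hbeta by (simp add: \<beta>_def S_def)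
  have Spos: "\<And>s. s \<in> S \<Longrightarrow> s > 0" unfolding S_def using hwpos by (auto intro!: prod_pos)
  have bddS: "bdd_below S" using Spos by (auto simp: bdd_below_def intro!: exI[of _ 0] less_imp_le)
  obtain t0 where t0: "t0 \<in> F" using hF(2) by auto
  define R where "R = measure M F powr (1/p) / \<beta>"
  have R0: "R \<ge> 0" using bpos by (simp add: R_def)
  define f0 where "f0 x = complex_of_real (R+1) * indicator {t0} x" for x
  have f0X: "f0 \<in> X" unfolding f0_def by (intro multX indX) simp
  show ?thesis
  proof (rule baire[OF f0X, of 1])
    show "{g \<in> X. d f0 g < 1} \<subseteq> {f \<in> X. \<forall>n\<ge>N.
              Lp_norm M p (\<lambda>x. (weighted_translation a w ^^ \<gamma> n) f x - indicator F x)
                \<ge> measure M F powr (1 / p)}"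
    proof (intro subsetI CollectI conjI allI impI)
      fix g assume "g \<in> {g \<in> X. d f0 g < 1}"
      then have gX: "g \<in> X" and dg: "d f0 g < 1" by auto
      show "g \<in> X" by (rule gX)
      have "norm (f0 t0 - g t0) < 1" using dist_pt[OF f0X gX, of t0] dg by simp
      moreover have "norm (f0 t0) = R + 1" using R0 by (simp add: f0_def)
      ultimately have gR: "norm (g t0) > R"
        using norm_triangle_ineq2[of "f0 t0" "g t0"] by linarith
      fix n assume "n \<ge> N"
      define x0 where "x0 = (plus a ^^ \<gamma> n) t0"
      have x0F: "x0 \<notin> F" using hdisj \<open>n \<ge> N\<close> t0 unfolding x0_def by blast
      define P where "P = (\<Prod>k=1..\<gamma> n. w ((plus a ^^ k) t0))"
      have PS: "P \<in> S" unfolding S_def P_def using \<open>n \<ge> N\<close> t0 by blast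
      have Pb: "P \<ge> \<beta>" unfolding \<beta>_def by (rule cInf_lower[OF PS bddS])
      have hX: "(\<lambda>x. (weighted_translation a w ^^ \<gamma> n) g x - indicator F x) \<in> X"
        by (intro diffX TpX gX indX hF(1))
      have "(weighted_translation a w ^^ \<gamma> n) g x0 - indicator F x0 = complex_of_real P * g t0"
        using x0F unfolding x0_def P_def by (simp add: Tpow_val)
      then have "norm ((weighted_translation a w ^^ \<gamma> n) g x0 - indicator F x0) = P * norm (g t0)"
        using bpos Pb by (simp add: norm_mult)
      also have "\<dots> \<ge> \<beta> * norm (g t0)" using Pb by (intro mult_right_mono) auto
      moreover have "\<beta> * norm (g t0) > \<beta> * R" using gR bpos by simp
      moreover have "\<beta> * R = measure M F powr (1/p)" using bpos by (simp add: R_def)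
      ultimately have "norm ((weighted_translation a w ^^ \<gamma> n) g x0 - indicator F x0) > measure M F powr (1/p)"
        by linarith
      then show "measure M F powr (1/p) \<le> Lp_norm M p (\<lambda>x. (weighted_translation a w ^^ \<gamma> n) g x - indicator F x)"
        using point[OF hX, of x0] by linarith
    qed
  qed simp
qed

end
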